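(* Let $t\ge 3$ and $d\ge 0$ be integers. Every graph $G$ with $\mathrm{tww}(G)\le d$ that contains no clique on $t$ vertices admits a proper vertex coloring with at most $(d+2)^{t-2}$ colors. In particular, every class of graphs of bounded twin-width is $\chi$-bounded.
   Context: A class $\mathcal C$ of graphs is $\chi$-bounded if there is a function $f$ with $\chi(G)\le f(\omega(G))$ for all $G\in\mathcal C$, where $\chi$ is the chromatic number and $\omega$ the clique number. A trigraph $H$ consists of a vertex set $V(H)$ and two disjoint sets of unordered pairs of distinct vertices: black edges $E(H)$ and red edges $R(H)$. Two vertices are adjacent (neighbors) if they are joined by a black or a red edge. The red graph of $H$ is the graph $(V(H),R(H))$; $H$ is a $d$-trigraph if its red graph has maximum degree at most $d$. A graph is a trigraph with no red edges. Contracting two distinct vertices $u,v$ of a trigraph $H$ yields the trigraph obtained by deleting $u$ and $v$ and adding a new vertex $z$ such that, for every other vertex $x$: $zx$ is a black edge if both $ux$ and $vx$ are black edges; $zx$ is not an edge if $x$ is adjacent to neither $u$ nor $v$; and $zx$ is a red edge otherwise. All edges not incident to $u$ or $v$ are unchanged. A $d$-sequence of an $n$-vertex graph $G$ is a sequence of $d$-trigraphs $G=G_n,G_{n-1},\dots,G_1$ such that $G_1$ has a single vertex and each $G_{i-1}$ is obtained from $G_i$ by one contraction (so $G_i$ has $i$ vertices). The twin-width $\mathrm{tww}(G)$ of $G$ is the minimum $d$ such that $G$ admits a $d$-sequence. *)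

theory Defs
  imports Main
begin

definition simple_graph :: "'a set \<Rightarrow> 'a set set \<Rightarrow> bool" where
  "simple_graph V E \<longleftrightarrow> finite V \<and>
     (\<forall>e\<in>E. \<exists>x y. x \<in> V \<and> y \<in> V \<and> x \<noteq> y \<and> e = {x, y})"

record 'a trigraph =
  tverts :: "'a set"
  blk :: "'a set set"
  red :: "'a set set"

definition tadj :: "'a trigraph \<Rightarrow> 'a \<Rightarrow> 'a \<Rightarrow> bool" where
  "tadj H x y \<longleftrightarrow> {x, y} \<in> blk H \<or> {x, y} \<in> red H"

definition d_trigraph :: "nat \<Rightarrow> 'a trigraph \<Rightarrow> bool" where
  "d_trigraph d H \<longleftrightarrow> (\<forall>x\<in>tverts H. card {y \<in> tverts H. y \<noteq> x \<and> {x, y} \<in> red H} \<le> d)"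

text \<open>Contract distinct vertices u, v into a new vertex z (z must not clash with
  the remaining vertices; it may reuse the name of u or v).\<close>
definition contract :: "'a trigraph \<Rightarrow> 'a \<Rightarrow> 'a \<Rightarrow> 'a \<Rightarrow> 'a trigraph" where
  "contract H u v z =
     \<lparr> tverts = (tverts H - {u, v}) \<union> {z},
       blk = {e \<in> blk H. u \<notin> e \<and> v \<notin> e}
             \<union> {{z, x} | x. x \<in> tverts H - {u, v} \<and> {u, x} \<in> blk H \<and> {v, x} \<in> blk H},
       red = {e \<in> red H. u \<notin> e \<and> v \<notin> e}
             \<union> {{z, x} | x. x \<in> tverts H - {u, v} \<and> (tadj H u x \<or> tadj H v x)
                          \<and> \<not> ({u, x} \<in> blk H \<and> {v, x} \<in> blk H)} \<rparr>"

definition contraction_step :: "'a trigraph \<Rightarrow> 'a trigraph \<Rightarrow> bool" where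
  "contraction_step H H' \<longleftrightarrow>
     (\<exists>u v z. u \<in> tverts H \<and> v \<in> tverts H \<and> u \<noteq> v \<and> z \<notin> tverts H - {u, v}
              \<and> H' = contract H u v z)"

definition graph_trigraph :: "'a set \<Rightarrow> 'a set set \<Rightarrow> 'a trigraph" where
  "graph_trigraph V E = \<lparr> tverts = V, blk = E, red = {} \<rparr>"

text \<open>A d-sequence G = G_n, ..., G_1, stored as the list [G_n, ..., G_1].\<close>
definition d_sequence :: "'a set \<Rightarrow> 'a set set \<Rightarrow> nat \<Rightarrow> 'a trigraph list \<Rightarrow> bool" where
  "d_sequence V E d Hs \<longleftrightarrow>
     Hs \<noteq> [] \<and> length Hs = card V \<and> hd Hs = graph_trigraph V E
     \<and> card (tverts (last Hs)) = 1
     \<and> (\<forall>H\<in>set Hs. d_trigraph d H)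
     \<and> (\<forall>i. Suc i < length Hs \<longrightarrow> contraction_step (Hs ! i) (Hs ! Suc i))"

definition twin_width :: "'a set \<Rightarrow> 'a set set \<Rightarrow> nat" where
  "twin_width V E = (LEAST d. \<exists>Hs. d_sequence V E d Hs)"

definition is_clique :: "'a set set \<Rightarrow> 'a set \<Rightarrow> bool" where
  "is_clique E K \<longleftrightarrow> (\<forall>x\<in>K. \<forall>y\<in>K. x \<noteq> y \<longrightarrow> {x, y} \<in> E)"

definition proper_coloring :: "'a set \<Rightarrow> 'a set set \<Rightarrow> nat \<Rightarrow> ('a \<Rightarrow> nat) \<Rightarrow> bool" where
  "proper_coloring V E k c \<longleftrightarrow> (\<forall>x\<in>V. c x < k) \<and>
     (\<forall>x\<in>V. \<forall>y\<in>V. x \<noteq> y \<longrightarrow> {x, y} \<in> E \<longrightarrow> c x \<noteq> c y)"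

end

theory Submission
  imports Defs
begin


lemma contract_simps:
  "tverts (contract H u v z) = (tverts H - {u, v}) \<union> {z}"
  "blk (contract H u v z) = {e \<in> blk H. u \<notin> e \<and> v \<notin> e}
             \<union> {{z, x} | x. x \<in> tverts H - {u, v} \<and> {u, x} \<in> blk H \<and> {v, x} \<in> blk H}"
  "red (contract H u v z) = {e \<in> red H. u \<notin> e \<and> v \<notin> e}
             \<union> {{z, x} | x. x \<in> tverts H - {u, v} \<and> (tadj H u x \<or> tadj H v x)
                          \<and> \<not> ({u, x} \<in> blk H \<and> {v, x} \<in> blk H)}"
  by (simp_all add: contract_def)

locale tws =
  fixes V :: "'a set" and E :: "'a set set" and d :: nat and Hs :: "'a trigraph list"
  assumes sg: "simple_graph V E" and ds: "d_sequence V E d Hs"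
begin

definition T :: "nat \<Rightarrow> 'a trigraph" where "T j = Hs ! j"

definition trip :: "nat \<Rightarrow> 'a \<times> 'a \<times> 'a" where
 "trip j = (SOME (u,v,z). u \<in> tverts (T j) \<and> v \<in> tverts (T j) \<and> u \<noteq> v \<and> z \<notin> tverts (T j) - {u, v} \<and> T (Suc j) = contract (T j) u v z)"

definition "cu j = fst (trip j)"
definition "cv j = fst (snd (trip j))"
definition "cz j = snd (snd (trip j))"

lemma trip_prop:
  assumes "Suc j < length Hs"
  shows "cu j \<in> tverts (T j) \<and> cv j \<in> tverts (T j) \<and> cu j \<noteq> cv j \<and> cz j \<notin> tverts (T j) - {cu j, cv j} \<and> T (Suc j) = contract (T j) (cu j) (cv j) (cz j)"
proof -
  define P where "P = (\<lambda>(u,v,z). u \<in> tverts (T j) \<and> v \<in> tverts (T j) \<and> u \<noteq> v \<and> z \<notin> tverts (T j) - {u, v} \<and> T (Suc j) = contract (T j) u v z)"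
  have "contraction_step (T j) (T (Suc j))" using ds assms unfolding d_sequence_def T_def by blast
  then obtain u v z where "u \<in> tverts (T j) \<and> v \<in> tverts (T j) \<and> u \<noteq> v \<and> z \<notin> tverts (T j) - {u, v} \<and> T (Suc j) = contract (T j) u v z"
    unfolding contraction_step_def by blast
  then have "P (u,v,z)" unfolding P_def by simp
  then have "P (trip j)" unfolding trip_def P_def[symmetric] by (rule someI)
  moreover obtain a b c where "trip j = (a,b,c)" by (cases "trip j") auto
  ultimately show ?thesis unfolding cu_def cv_def cz_def P_def by simp
qed

definition phi :: "nat \<Rightarrow> 'a \<Rightarrow> 'a" where
  "phi j a = (if a = cu j \<or> a = cv j then cz j else a)"

primrec rep :: "nat \<Rightarrow> 'a \<Rightarrow> 'a" where
  "rep 0 x = x" | "rep (Suc j) x = phi j (rep j x)"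

lemma n_pos: "0 < length Hs" using ds unfolding d_sequence_def by blast

lemma T0: "T 0 = graph_trigraph V E"
  using ds unfolding d_sequence_def T_def by (cases Hs) auto

lemma fin: "j < length Hs \<Longrightarrow> finite (tverts (T j))"
proof (induction j)
  case 0 then show ?case using sg by (simp add: T0 graph_trigraph_def simple_graph_def)
next
  case (Suc j)
  then show ?case using trip_prop[of j] by (simp add: contract_simps)
qed

lemma rep_in: "x \<in> V \<Longrightarrow> j < length Hs \<Longrightarrow> rep j x \<in> tverts (T j)"
proof (induction j)
  case 0 then show ?case by (simp add: T0 graph_trigraph_def)
next
  case (Suc j)
  then show ?case using trip_prop[of j] by (auto simp: contract_simps phi_def)
qed

lemma phi_z: "Suc j < length Hs \<Longrightarrow> c \<in> tverts (T j) \<Longrightarrow> (phi j c = cz j) = (c = cu j \<or> c = cv j)"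
  using trip_prop[of j] by (auto simp: phi_def)

lemma wf: "j < length Hs \<Longrightarrow> e \<in> blk (T j) \<union> red (T j) \<Longrightarrow> \<exists>a b. a \<in> tverts (T j) \<and> b \<in> tverts (T j) \<and> a \<noteq> b \<and> e = {a, b}"
proof (induction j arbitrary: e)
  case 0 then show ?case using sg by (auto simp: T0 graph_trigraph_def simple_graph_def)
next
  case (Suc j)
  have tp: "cu j \<in> tverts (T j) \<and> cv j \<in> tverts (T j) \<and> cu j \<noteq> cv j \<and> cz j \<notin> tverts (T j) - {cu j, cv j} \<and> T (Suc j) = contract (T j) (cu j) (cv j) (cz j)"
    using trip_prop Suc.prems by blast
  from Suc.prems(2) tp consider
    (old) "e \<in> blk (T j) \<union> red (T j)" "cu j \<notin> e" "cv j \<notin> e"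
  | (new) x where "x \<in> tverts (T j) - {cu j, cv j}" "e = {cz j, x}"
    by (auto simp: contract_simps)
  then show ?case
  proof cases
    case old
    then obtain a b where "a \<in> tverts (T j) \<and> b \<in> tverts (T j) \<and> a \<noteq> b \<and> e = {a, b}" using Suc by force
    then show ?thesis using old tp by (auto simp: contract_simps)
  next
    case new
    then show ?thesis using tp by (auto simp: contract_simps)
  qed
qed

lemma tp: "Suc j < length Hs \<Longrightarrow> cu j \<in> tverts (T j) \<and> cv j \<in> tverts (T j) \<and> cu j \<noteq> cv j \<and> cz j \<notin> tverts (T j) - {cu j, cv j} \<and> T (Suc j) = contract (T j) (cu j) (cv j) (cz j)"
  by (rule trip_prop)

lemma phi_notz: "Suc j < length Hs \<Longrightarrow> c \<in> tverts (T j) \<Longrightarrow> phi j c \<noteq> cz j \<Longrightarrow> phi j c = c"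
  by (auto simp: phi_def)

lemma phi_in_old: "Suc j < length Hs \<Longrightarrow> c \<in> tverts (T j) \<Longrightarrow> a \<in> tverts (T j) - {cu j, cv j} \<Longrightarrow> phi j c = a \<Longrightarrow> c = a"
  using tp[of j] by (auto simp: phi_def split: if_splits)

lemma blk_complete:
  "j < length Hs \<Longrightarrow> x \<in> V \<Longrightarrow> y \<in> V \<Longrightarrow> rep j x \<noteq> rep j y \<Longrightarrow> {rep j x, rep j y} \<in> blk (T j) \<Longrightarrow> {x, y} \<in> E"
proof (induction j arbitrary: x y)
  case 0 then show ?case by (simp add: T0 graph_trigraph_def)
next
  case (Suc j)
  let ?u = "cu j" and ?v = "cv j" and ?z = "cz j"
  define rx where "rx = rep j x"
  define ry where "ry = rep j y"
  have j: "Suc j < length Hs" "j < length Hs" using Suc.prems by auto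
  have t: "?u \<in> tverts (T j) \<and> ?v \<in> tverts (T j) \<and> ?u \<noteq> ?v \<and> ?z \<notin> tverts (T j) - {?u, ?v} \<and> T (Suc j) = contract (T j) ?u ?v ?z"
    using tp j by blast
  have rxi: "rx \<in> tverts (T j)" "ry \<in> tverts (T j)" using rep_in Suc.prems j unfolding rx_def ry_def by auto
  have ne: "phi j rx \<noteq> phi j ry" using Suc.prems(4) unfolding rx_def ry_def by simp
  have "{phi j rx, phi j ry} \<in> blk (T (Suc j))" using Suc.prems(5) unfolding rx_def ry_def by simp
  then consider
    (old) "{phi j rx, phi j ry} \<in> blk (T j)" "?u \<notin> {phi j rx, phi j ry}" "?v \<notin> {phi j rx, phi j ry}"
  | (new) w where "w \<in> tverts (T j) - {?u, ?v}" "{phi j rx, phi j ry} = {?z, w}" "{?u, w} \<in> blk (T j)" "{?v, w} \<in> blk (T j)"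
    using t by (auto simp: contract_simps)
  then show ?case
  proof cases
    case old
    obtain a b where ab: "a \<in> tverts (T j)" "b \<in> tverts (T j)" "{phi j rx, phi j ry} = {a, b}"
      using wf[OF j(2), of "{phi j rx, phi j ry}"] old by blast
    have "phi j rx \<in> tverts (T j) - {?u, ?v}" "phi j ry \<in> tverts (T j) - {?u, ?v}"
      using ab old by (auto simp: doubleton_eq_iff)
    then have "rx = phi j rx" "ry = phi j ry" using phi_in_old[OF j(1)] rxi by blast+
    then show ?thesis using Suc.IH[OF j(2) Suc.prems(2,3)] old ne unfolding rx_def ry_def by simp
  next
    case new
    have rz: "rx \<in> {?u, ?v} \<longleftrightarrow> phi j rx = ?z" "ry \<in> {?u, ?v} \<longleftrightarrow> phi j ry = ?z"
      using phi_z[OF j(1)] rxi by auto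
    from new(2) have "(phi j rx = ?z \<and> phi j ry = w) \<or> (phi j rx = w \<and> phi j ry = ?z)"
      by (auto simp: doubleton_eq_iff)
    then show ?thesis
    proof
      assume a: "phi j rx = ?z \<and> phi j ry = w"
      then have "ry = w" using phi_in_old[OF j(1) rxi(2) new(1)] by blast
      moreover have "rx = ?u \<or> rx = ?v" using rz a by auto
      ultimately have "{rx, ry} \<in> blk (T j)" "rx \<noteq> ry" using new by auto
      then show ?thesis using Suc.IH[OF j(2) Suc.prems(2,3)] unfolding rx_def ry_def by simp
    next
      assume a: "phi j rx = w \<and> phi j ry = ?z"
      then have "rx = w" using phi_in_old[OF j(1) rxi(1) new(1)] by blast
      moreover have "ry = ?u \<or> ry = ?v" using rz a by auto
      ultimately have "{rx, ry} \<in> blk (T j)" "rx \<noteq> ry" using new by (auto simp: insert_commute)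
      then show ?thesis using Suc.IH[OF j(2) Suc.prems(2,3)] unfolding rx_def ry_def by simp
    qed
  qed
qed

lemma edge_adj:
  "j < length Hs \<Longrightarrow> x \<in> V \<Longrightarrow> y \<in> V \<Longrightarrow> {x, y} \<in> E \<Longrightarrow> rep j x \<noteq> rep j y \<Longrightarrow> tadj (T j) (rep j x) (rep j y)"
proof (induction j arbitrary: x y)
  case 0 then show ?case by (simp add: T0 graph_trigraph_def tadj_def)
next
  case (Suc j)
  let ?u = "cu j" and ?v = "cv j" and ?z = "cz j"
  define rx where "rx = rep j x"
  define ry where "ry = rep j y"
  have j: "Suc j < length Hs" "j < length Hs" using Suc.prems by auto
  have t: "?u \<in> tverts (T j) \<and> ?v \<in> tverts (T j) \<and> ?u \<noteq> ?v \<and> ?z \<notin> tverts (T j) - {?u, ?v} \<and> T (Suc j) = contract (T j) ?u ?v ?z"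
    using tp j by blast
  have rxi: "rx \<in> tverts (T j)" "ry \<in> tverts (T j)" using rep_in Suc.prems j unfolding rx_def ry_def by auto
  have ne: "phi j rx \<noteq> phi j ry" using Suc.prems(5) unfolding rx_def ry_def by simp
  then have ne0: "rx \<noteq> ry" by auto
  have ih: "tadj (T j) rx ry" using Suc.IH[OF j(2) Suc.prems(2,3,4)] ne0 unfolding rx_def ry_def by simp
  have rz: "rx \<in> {?u, ?v} \<longleftrightarrow> phi j rx = ?z" "ry \<in> {?u, ?v} \<longleftrightarrow> phi j ry = ?z"
    using phi_z[OF j(1)] rxi by auto
  have ph: "rx \<notin> {?u, ?v} \<Longrightarrow> phi j rx = rx" "ry \<notin> {?u, ?v} \<Longrightarrow> phi j ry = ry" by (auto simp: phi_def)
  consider (nn) "rx \<notin> {?u, ?v}" "ry \<notin> {?u, ?v}" | (yn) "rx \<in> {?u, ?v}" "ry \<notin> {?u, ?v}"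
    | (ny) "rx \<notin> {?u, ?v}" "ry \<in> {?u, ?v}"
    using ne rz by auto
  then have "tadj (T (Suc j)) (phi j rx) (phi j ry)"
  proof cases
    case nn
    then show ?thesis using ih ph t by (auto simp: tadj_def contract_simps)
  next
    case yn
    have "tadj (T j) ?u ry \<or> tadj (T j) ?v ry" using ih yn by auto
    then show ?thesis using yn rz ph rxi t by (auto simp: tadj_def contract_simps)
  next
    case ny
    have "tadj (T j) ?u rx \<or> tadj (T j) ?v rx" using ih ny by (auto simp: tadj_def insert_commute)
    then have "tadj (T (Suc j)) (phi j ry) (phi j rx)" using ny rz ph rxi t by (auto simp: tadj_def contract_simps)
    then show ?thesis by (simp add: tadj_def insert_commute)
  qed
  then show ?case unfolding rx_def ry_def by simp
qed

lemma rep_mono: "rep j x = rep j y \<Longrightarrow> j \<le> k \<Longrightarrow> rep k x = rep k y"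
  by (induction k) (auto simp: le_Suc_eq)

lemma last_single: "x \<in> V \<Longrightarrow> y \<in> V \<Longrightarrow> rep (length Hs - 1) x = rep (length Hs - 1) y"
proof -
  assume xy: "x \<in> V" "y \<in> V"
  have "T (length Hs - 1) = last Hs" unfolding T_def using n_pos by (simp add: last_conv_nth)
  then have "card (tverts (T (length Hs - 1))) = 1" using ds unfolding d_sequence_def by simp
  then obtain w where "tverts (T (length Hs - 1)) = {w}" using card_1_singletonE by blast
  then show ?thesis using rep_in[OF xy(1), of "length Hs - 1"] rep_in[OF xy(2), of "length Hs - 1"] n_pos by auto
qed

lemma red_deg: "j < length Hs \<Longrightarrow> card {y \<in> tverts (T j). y \<noteq> p \<and> {p, y} \<in> red (T j)} \<le> d"
proof -
  assume j: "j < length Hs"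
  then have "T j \<in> set Hs" unfolding T_def by simp
  then have "d_trigraph d (T j)" using ds unfolding d_sequence_def by blast
  show ?thesis
  proof (cases "p \<in> tverts (T j)")
    case True then show ?thesis using \<open>d_trigraph d (T j)\<close> unfolding d_trigraph_def by blast
  next
    case False
    have e: "{y \<in> tverts (T j). y \<noteq> p \<and> {p, y} \<in> red (T j)} = {}"
    proof (intro equals0I)
      fix y assume "y \<in> {y \<in> tverts (T j). y \<noteq> p \<and> {p, y} \<in> red (T j)}"
      then have "{p, y} \<in> blk (T j) \<union> red (T j)" by auto
      then obtain a b where "a \<in> tverts (T j)" "b \<in> tverts (T j)" "{p, y} = {a, b}" using wf[OF j] by blast
      then show False using False by (auto simp: doubleton_eq_iff)
    qed
    show ?thesis unfolding e by simp
  qed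
qed

lemma cardT:
  assumes j: "Suc j < length Hs" and r0: "r0 \<in> tverts (T j)" and fR: "finite R" and nR: "phi j r0 \<notin> R"
  shows "card {a \<in> tverts (T j). a \<noteq> r0 \<and> phi j a \<in> R \<union> {phi j r0}} \<le> card R + 1"
proof -
  let ?u = "cu j" and ?v = "cv j" and ?z = "cz j"
  let ?T = "{a \<in> tverts (T j). a \<noteq> r0 \<and> phi j a \<in> R \<union> {phi j r0}}"
  have t: "?u \<in> tverts (T j) \<and> ?v \<in> tverts (T j) \<and> ?u \<noteq> ?v \<and> ?z \<notin> tverts (T j) - {?u, ?v}"
    using tp[OF j] by blast
  show ?thesis
  proof (cases "r0 = ?u \<or> r0 = ?v")
    case True
    then have pz: "phi j r0 = ?z" by (simp add: phi_def)
    have "?T \<subseteq> ({?u, ?v} - {r0}) \<union> R"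
    proof
      fix a assume a: "a \<in> ?T"
      show "a \<in> ({?u, ?v} - {r0}) \<union> R"
      proof (cases "a = ?u \<or> a = ?v")
        case True then show ?thesis using a by auto
      next
        case False
        then have "phi j a = a" by (simp add: phi_def)
        moreover have "a \<noteq> ?z" using t a False by auto
        ultimately show ?thesis using a pz by auto
      qed
    qed
    then have "card ?T \<le> card (({?u, ?v} - {r0}) \<union> R)" using fR by (intro card_mono) auto
    also have "\<dots> \<le> card ({?u, ?v} - {r0}) + card R" by (rule card_Un_le)
    also have "({?u, ?v} - {r0}) = (if r0 = ?u then {?v} else {?u})" using True t by auto
    finally show ?thesis by (simp split: if_splits)
  next
    case False
    then have pr: "phi j r0 = r0" by (simp add: phi_def)
    have zr: "?z \<noteq> r0" using False t r0 by auto
    show ?thesis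
    proof (cases "?z \<in> R")
      case False2: False
      have "?T \<subseteq> R"
      proof
        fix a assume a: "a \<in> ?T"
        show "a \<in> R"
        proof (cases "a = ?u \<or> a = ?v")
          case True then show ?thesis using a zr pr False2 by (auto simp: phi_def)
        next
          case False
          then show ?thesis using a pr by (auto simp: phi_def)
        qed
      qed
      then have "card ?T \<le> card R" using fR by (intro card_mono) auto
      then show ?thesis by simp
    next
      case True
      have "?T \<subseteq> {?u, ?v} \<union> (R - {?z})"
      proof
        fix a assume a: "a \<in> ?T"
        show "a \<in> {?u, ?v} \<union> (R - {?z})"
        proof (cases "a = ?u \<or> a = ?v")
          case True then show ?thesis by auto
        next
          case False
          then have "phi j a = a" by (simp add: phi_def)
          moreover have "a \<noteq> ?z" using t a False by auto
          ultimately show ?thesis using a pr by auto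
        qed
      qed
      then have "card ?T \<le> card ({?u, ?v} \<union> (R - {?z}))" using fR by (intro card_mono) auto
      also have "\<dots> \<le> card {?u, ?v} + card (R - {?z})" by (rule card_Un_le)
      also have "card (R - {?z}) = card R - 1" using True fR by simp
      also have "card {?u, ?v} = 2" using t by simp
      finally have "card ?T \<le> 2 + (card R - 1)" .
      moreover have "card R > 0" using True fR card_gt_0_iff by blast
      ultimately show ?thesis by linarith
    qed
  qed
qed

end



lemma greedy:
  fixes N :: "'b set" and r :: "'b \<Rightarrow> nat"
  assumes "finite N" "\<And>A B. adj A B \<Longrightarrow> adj B A" "\<And>A. \<not> adj A A"
    "\<And>A. A \<in> N \<Longrightarrow> card {B \<in> N. adj A B \<and> r A \<le> r B} \<le> k"
  shows "\<exists>g. (\<forall>A\<in>N. g A \<le> k) \<and> (\<forall>A\<in>N. \<forall>B\<in>N. adj A B \<longrightarrow> g A \<noteq> g B)"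
  using assms
proof (induction "card N" arbitrary: N rule: less_induct)
  case less
  show ?case
  proof (cases "N = {}")
    case True then show ?thesis by auto
  next
    case False
    have "Min (r ` N) \<in> r ` N" using False less.prems(1) by simp
    then obtain A0 where A0: "A0 \<in> N" "r A0 = Min (r ` N)" by (metis imageE)
    have minA: "\<And>B. B \<in> N \<Longrightarrow> r A0 \<le> r B" using A0 less.prems(1) by simp
    define N' where "N' = N - {A0}"
    have cN: "card N' < card N" unfolding N'_def using A0 less.prems(1) by (meson card_Diff1_less)
    have fN: "finite N'" unfolding N'_def using less.prems(1) by simp
    have kN: "\<And>A. A \<in> N' \<Longrightarrow> card {B \<in> N'. adj A B \<and> r A \<le> r B} \<le> k"
    proof -
      fix A assume "A \<in> N'"
      then have "card {B \<in> N'. adj A B \<and> r A \<le> r B} \<le> card {B \<in> N. adj A B \<and> r A \<le> r B}"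
        using less.prems(1) by (intro card_mono) (auto simp: N'_def)
      also have "\<dots> \<le> k" using less.prems(4) \<open>A \<in> N'\<close> by (auto simp: N'_def)
      finally show "card {B \<in> N'. adj A B \<and> r A \<le> r B} \<le> k" .
    qed
    obtain g' where g': "\<forall>A\<in>N'. g' A \<le> k" "\<forall>A\<in>N'. \<forall>B\<in>N'. adj A B \<longrightarrow> g' A \<noteq> g' B"
      using less.hyps[OF cN fN less.prems(2,3) kN] by blast
    define C where "C = g' ` {B \<in> N'. adj A0 B}"
    have "card C \<le> card {B \<in> N'. adj A0 B}" unfolding C_def
      using \<open>finite N'\<close> by (intro card_image_le) simp
    also have "\<dots> \<le> card {B \<in> N. adj A0 B \<and> r A0 \<le> r B}"
      using less.prems(1) minA by (intro card_mono) (auto simp: N'_def)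
    also have "\<dots> \<le> k" using less.prems(4) A0 by blast
    finally have cC: "card C \<le> k" .
    have "\<exists>c\<in>{0..k}. c \<notin> C"
    proof (rule ccontr)
      assume "\<not> ?thesis"
      then have "{0..k} \<subseteq> C" by auto
      moreover have "finite C" unfolding C_def using \<open>finite N'\<close> by simp
      ultimately have "card {0..k} \<le> card C" by (rule card_mono[rotated])
      then show False using cC by simp
    qed
    then obtain c where c: "c \<le> k" "c \<notin> C" by auto
    define g where "g = g'(A0 := c)"
    have "\<forall>A\<in>N. g A \<le> k" using g'(1) c unfolding g_def N'_def by auto
    moreover have "\<forall>A\<in>N. \<forall>B\<in>N. adj A B \<longrightarrow> g A \<noteq> g B"
    proof (intro ballI impI)
      fix A B assume AB: "A \<in> N" "B \<in> N" "adj A B"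
      show "g A \<noteq> g B"
      proof (cases "A = A0")
        case True
        then have "B \<noteq> A0" using AB less.prems(3) by auto
        then have "g' B \<in> C" unfolding C_def N'_def using AB True by auto
        then show ?thesis using c True \<open>B \<noteq> A0\<close> unfolding g_def by auto
      next
        case False
        show ?thesis
        proof (cases "B = A0")
          case True
          then have "g' A \<in> C" unfolding C_def N'_def using AB False less.prems(2) by auto
          then show ?thesis using c True False unfolding g_def by auto
        next
          case False2: False
          then show ?thesis using g'(2) AB False unfolding g_def N'_def by auto
        qed
      qed
    qed
    ultimately show ?thesis by blast
  qed
qed




locale twsX = tws V E d Hs for V :: "'a set" and E d Hs +
  fixes X :: "'a set"
  assumes XV: "X \<subseteq> V"
begin

definition good :: "nat \<Rightarrow> 'a \<Rightarrow> bool" where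
  "good j x \<longleftrightarrow> j < length Hs \<and> (\<exists>y\<in>X. rep j y \<noteq> rep j x \<and> {rep j x, rep j y} \<in> blk (T j))"

definition hasg :: "'a \<Rightarrow> bool" where "hasg x \<longleftrightarrow> (\<exists>j. good j x)"

definition top :: "'a \<Rightarrow> nat" where "top x = (if hasg x then Max {j. good j x} else 0)"

definition M :: "'a \<Rightarrow> 'a set" where
  "M x = (if hasg x then {y \<in> X. rep (top x) y = rep (top x) x} else {x})"

lemma good_fin: "finite {j. good j x}"
  by (rule finite_subset[of _ "{..<length Hs}"]) (auto simp: good_def)

lemma top_good: "hasg x \<Longrightarrow> good (top x) x"
  unfolding top_def using good_fin by (auto simp: hasg_def intro: Max_in[of "{j. good j x}", simplified])

lemma top_max: "good j x \<Longrightarrow> j \<le> top x"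
  unfolding top_def using good_fin by (auto simp: hasg_def)

lemma good_rep: "good j x \<Longrightarrow> rep j y = rep j x \<Longrightarrow> good j y"
  unfolding good_def by auto

lemma good_lt: "good j x \<Longrightarrow> x \<in> V \<Longrightarrow> Suc j < length Hs"
proof (rule ccontr)
  assume g: "good j x" and x: "x \<in> V" and "\<not> Suc j < length Hs"
  then have "j = length Hs - 1" unfolding good_def by auto
  moreover obtain y where "y \<in> X" "rep j y \<noteq> rep j x" using g unfolding good_def by blast
  ultimately show False using last_single[OF x, of y] XV by auto
qed

lemma M_in: "x \<in> X \<Longrightarrow> x \<in> M x" unfolding M_def by auto
lemma M_sub: "x \<in> X \<Longrightarrow> M x \<subseteq> X" unfolding M_def by auto

lemma Mb:
  assumes x: "x \<in> X" and h: "hasg x" and y: "y \<in> M x"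
  shows "hasg y \<and> top y = top x \<and> M y = M x"
proof -
  have yX: "y \<in> X" and ry: "rep (top x) y = rep (top x) x" using y h unfolding M_def by auto
  have gy: "good (top x) y" using good_rep[OF top_good[OF h] ry] .
  then have hy: "hasg y" unfolding hasg_def by blast
  have le1: "top x \<le> top y" using top_max[OF gy] .
  have "rep (top y) y = rep (top y) x" using rep_mono[OF ry le1] .
  then have "good (top y) x" using good_rep[OF top_good[OF hy]] by simp
  then have "top y \<le> top x" by (rule top_max)
  then have eq: "top y = top x" using le1 by simp
  have "M y = M x" unfolding M_def using h hy eq ry by auto
  then show ?thesis using hy eq by simp
qed

lemma Mb': "x \<in> X \<Longrightarrow> z \<in> M x \<Longrightarrow> M z = M x"
proof -
  assume a: "x \<in> X" "z \<in> M x"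
  show "M z = M x"
  proof (cases "hasg x")
    case True then show ?thesis using Mb[OF a(1) True a(2)] by simp
  next
    case False then have "z = x" using a(2) unfolding M_def by simp
    then show ?thesis by simp
  qed
qed

lemma top_eqM: "x \<in> X \<Longrightarrow> y \<in> X \<Longrightarrow> M x = M y \<Longrightarrow> top x = top y"
proof -
  assume xy: "x \<in> X" "y \<in> X" "M x = M y"
  then have "x \<in> M y" using M_in by auto
  show "top x = top y"
  proof (cases "hasg y")
    case True then show ?thesis using Mb[OF xy(2) True \<open>x \<in> M y\<close>] by simp
  next
    case False then have "x = y" using \<open>x \<in> M y\<close> unfolding M_def by simp
    then show ?thesis by simp
  qed
qed

lemma E_ne: "{x, y} \<in> E \<Longrightarrow> x \<noteq> y"
  using sg unfolding simple_graph_def by (auto simp: doubleton_eq_iff)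

lemma good0: "x \<in> X \<Longrightarrow> y \<in> X \<Longrightarrow> {x, y} \<in> E \<Longrightarrow> good 0 x"
proof -
  assume a: "x \<in> X" "y \<in> X" "{x, y} \<in> E"
  from a(3) have "x \<noteq> y" by (rule E_ne)
  then show "good 0 x" unfolding good_def using n_pos a by (auto simp: T0 graph_trigraph_def)
qed

lemma M_noclique:
  assumes x: "x \<in> X" and s2: "2 \<le> s" and nocl: "\<not> (\<exists>K \<subseteq> X. card K = Suc s \<and> is_clique E K)"
  shows "\<not> (\<exists>K \<subseteq> M x. card K = s \<and> is_clique E K)"
proof
  assume "\<exists>K \<subseteq> M x. card K = s \<and> is_clique E K"
  then obtain K where K: "K \<subseteq> M x" "card K = s" "is_clique E K" by blast
  show False
  proof (cases "hasg x")
    case False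
    then have "K \<subseteq> {x}" using K(1) unfolding M_def by simp
    then have "card K \<le> card {x}" by (intro card_mono) auto
    then have "card K \<le> 1" by simp
    then show False using K s2 by simp
  next
    case True
    let ?t = "top x"
    obtain w where w: "w \<in> X" "rep ?t w \<noteq> rep ?t x" "{rep ?t x, rep ?t w} \<in> blk (T ?t)"
      using top_good[OF True] unfolding good_def by blast
    have tl: "?t < length Hs" using top_good[OF True] unfolding good_def by simp
    have adjw: "\<And>y. y \<in> M x \<Longrightarrow> {y, w} \<in> E"
    proof -
      fix y assume "y \<in> M x"
      then have "y \<in> X" "rep ?t y = rep ?t x" using True unfolding M_def by auto
      then show "{y, w} \<in> E" using blk_complete[OF tl, of y w] w XV by auto
    qed
    have wK: "w \<notin> K" using K(1) w True unfolding M_def by auto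
    have fK: "finite K"
    proof (rule ccontr)
      assume "\<not> finite K" then have "card K = 0" by simp
      then show False using K s2 by simp
    qed
    have "insert w K \<subseteq> X" using K(1) M_sub[OF x] w by auto
    moreover have "card (insert w K) = Suc s" using wK fK K by simp
    moreover have "is_clique E (insert w K)"
      unfolding is_clique_def
    proof (intro ballI impI)
      fix a b assume ab: "a \<in> insert w K" "b \<in> insert w K" "a \<noteq> b"
      show "{a, b} \<in> E"
      proof (cases "a = w")
        case True
        then have "b \<in> K" using ab by auto
        then have "{b, w} \<in> E" using adjw K(1) by auto
        then show ?thesis using True by (simp add: insert_commute)
      next
        case False
        note aF = False
        show ?thesis
        proof (cases "b = w")
          case True
          then show ?thesis using adjw K(1) ab aF by auto
        next
          case False
          then show ?thesis using K(3) ab aF unfolding is_clique_def by auto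
        qed
      qed
    qed
    ultimately show False using nocl by blast
  qed
qed

definition adjN :: "'a set \<Rightarrow> 'a set \<Rightarrow> bool" where
  "adjN A B \<longleftrightarrow> A \<noteq> B \<and> (\<exists>a\<in>A. \<exists>b\<in>B. {a, b} \<in> E)"

definition rk :: "'a set \<Rightarrow> nat" where
  "rk B = top (SOME y. y \<in> X \<and> B = M y)"

lemma rk_M: "x \<in> X \<Longrightarrow> rk (M x) = top x"
proof -
  assume x: "x \<in> X"
  have "\<exists>y. y \<in> X \<and> M x = M y" using x by blast
  then have "(SOME y. y \<in> X \<and> M x = M y) \<in> X \<and> M x = M (SOME y. y \<in> X \<and> M x = M y)" by (rule someI_ex)
  then have "top x = top (SOME y. y \<in> X \<and> M x = M y)" using top_eqM[OF x] by blast
  then show ?thesis unfolding rk_def by simp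
qed

lemma key:
  assumes A: "A \<in> M ` X"
  shows "card {B \<in> M ` X. adjN A B \<and> rk A \<le> rk B} \<le> d + 1"
proof -
  obtain x0 where x0: "x0 \<in> X" "A = M x0" using A by blast
  let ?S = "{B \<in> M ` X. adjN A B \<and> rk A \<le> rk B}"
  show ?thesis
  proof (cases "hasg x0")
    case False
    have e: "?S = {}"
    proof (rule equals0I)
      fix B assume "B \<in> ?S"
      then obtain y a b where "y \<in> X" "B = M y" "a \<in> A" "b \<in> B" "{a, b} \<in> E" unfolding adjN_def by blast
      moreover have "A = {x0}" using x0 False unfolding M_def by simp
      moreover have "b \<in> X" using M_sub calculation by blast
      ultimately have "good 0 x0" using good0 x0 by blast
      then show False using False unfolding hasg_def by blast
    qed
    show ?thesis unfolding e by simp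
  next
    case True
    define j where "j = top x0"
    have gj: "good j x0" unfolding j_def using top_good[OF True] .
    have sj: "Suc j < length Hs" using good_lt[OF gj] x0 XV by auto
    define r0 where "r0 = rep j x0"
    define p where "p = phi j r0"
    define R where "R = {y \<in> tverts (T (Suc j)). y \<noteq> p \<and> {p, y} \<in> red (T (Suc j))}"
    define Tset where "Tset = {a \<in> tverts (T j). a \<noteq> r0 \<and> phi j a \<in> R \<union> {p}}"
    define wit where "wit B = (SOME yb. yb \<in> B \<and> (\<exists>xa\<in>A. {xa, yb} \<in> E))" for B
    have r0T: "r0 \<in> tverts (T j)" unfolding r0_def using rep_in x0 XV sj by auto
    have rkA: "rk A = j" using rk_M[OF x0(1)] x0 j_def by simp
    have MA: "\<And>y. y \<in> A \<longleftrightarrow> y \<in> X \<and> rep j y = r0" using x0 True unfolding M_def j_def r0_def by auto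
    have cl: "rep j (wit B) \<in> Tset \<and> M (wit B) = B \<and> wit B \<in> X \<and> j \<le> top (wit B) \<and> hasg (wit B)"
      if B: "B \<in> ?S" for B
    proof -
      obtain y' where y': "y' \<in> X" "B = M y'" using B by blast
      have ex: "\<exists>yb. yb \<in> B \<and> (\<exists>xa\<in>A. {xa, yb} \<in> E)" using B unfolding adjN_def by blast
      have wB: "wit B \<in> B \<and> (\<exists>xa\<in>A. {xa, wit B} \<in> E)" unfolding wit_def by (rule someI_ex[OF ex])
      define yb where "yb = wit B"
      obtain xa where xa: "xa \<in> A" "{xa, yb} \<in> E" using wB unfolding yb_def by blast
      have ybX: "yb \<in> X" using wB M_sub y' unfolding yb_def by blast
      have Myb: "M yb = B" using Mb'[OF y'(1)] wB y' unfolding yb_def by simp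
      have xaX: "xa \<in> X" using xa MA by blast
      have Mxa: "M xa = A" using Mb'[OF x0(1)] xa x0 by simp
      have topxa: "top xa = j" using top_eqM[OF xaX x0(1)] Mxa x0 j_def by simp
      have "{yb, xa} \<in> E" using xa by (simp add: insert_commute)
      then have hyb: "hasg yb" using good0[OF ybX xaX] unfolding hasg_def by blast
      have jle: "j \<le> top yb" using B rkA rk_M[OF ybX] Myb by simp
      have ry: "rep j yb \<in> tverts (T j)" using rep_in ybX XV sj by auto
      have rne: "rep j yb \<noteq> r0"
      proof
        assume "rep j yb = r0"
        then have "yb \<in> A" using MA ybX by simp
        then have "M yb = A" using Mb'[OF x0(1)] x0 by simp
        then show False using Myb B unfolding adjN_def by simp
      qed
      have rxa: "rep j xa = r0" using MA xa by blast
      have "rep (Suc j) yb \<in> R \<union> {p}"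
      proof (cases "rep (Suc j) xa = rep (Suc j) yb")
        case True then show ?thesis using rxa unfolding p_def by simp
      next
        case False
        have ta: "tadj (T (Suc j)) (rep (Suc j) xa) (rep (Suc j) yb)"
          using edge_adj[OF sj _ _ xa(2) False] xaX ybX XV by auto
        have "{rep (Suc j) xa, rep (Suc j) yb} \<notin> blk (T (Suc j))"
        proof
          assume "{rep (Suc j) xa, rep (Suc j) yb} \<in> blk (T (Suc j))"
          then have "good (Suc j) xa" unfolding good_def using sj ybX False by (intro conjI bexI[of _ yb]) auto
          then have "Suc j \<le> top xa" by (rule top_max)
          then show False using topxa by simp
        qed
        then have "{p, rep (Suc j) yb} \<in> red (T (Suc j))" using ta rxa unfolding tadj_def p_def by simp
        moreover have "rep (Suc j) yb \<in> tverts (T (Suc j))" using rep_in[of yb "Suc j"] ybX XV sj by blast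
        ultimately show ?thesis using False rxa unfolding R_def p_def by simp
      qed
      then have "rep j yb \<in> Tset" unfolding Tset_def using ry rne by simp
      then show ?thesis using Myb ybX jle hyb unfolding yb_def by simp
    qed
    have inj: "inj_on (\<lambda>B. rep j (wit B)) ?S"
    proof (rule inj_onI)
      fix B1 B2 assume b: "B1 \<in> ?S" "B2 \<in> ?S" "rep j (wit B1) = rep j (wit B2)"
      have c1: "M (wit B1) = B1" "wit B1 \<in> X" "j \<le> top (wit B1)" "hasg (wit B1)" using cl[OF b(1)] by auto
      have c2: "M (wit B2) = B2" "wit B2 \<in> X" using cl[OF b(2)] by auto
      have "rep (top (wit B1)) (wit B2) = rep (top (wit B1)) (wit B1)" using rep_mono[OF b(3)[symmetric] c1(3)] .
      then have "wit B2 \<in> M (wit B1)" using c1(2,4) c2(2) unfolding M_def by simp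
      then have "M (wit B2) = M (wit B1)" using Mb'[OF c1(2)] by simp
      then show "B1 = B2" using c1 c2 by simp
    qed
    have fT: "finite Tset" unfolding Tset_def using fin sj by auto
    have "card ?S \<le> card Tset"
      by (rule card_inj_on_le[OF inj _ fT]) (use cl in blast)
    also have "card Tset \<le> card R + 1"
    proof -
      have "finite R" unfolding R_def using fin[OF sj] by simp
      moreover have "p \<notin> R" unfolding R_def by simp
      ultimately show ?thesis using cardT[OF sj r0T, of R] unfolding Tset_def p_def by simp
    qed
    also have "card R \<le> d" unfolding R_def using red_deg[OF sj] .
    finally show ?thesis by simp
  qed
qed

lemma step:
  assumes s2: "2 \<le> s" and nocl: "\<not> (\<exists>K\<subseteq>X. card K = Suc s \<and> is_clique E K)"
   and IH: "\<And>S. S \<subseteq> V \<Longrightarrow> \<not> (\<exists>K\<subseteq>S. card K = s \<and> is_clique E K) \<Longrightarrow> \<exists>c. proper_coloring S E ((d+2)^(s-2)) c"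
  shows "\<exists>c. proper_coloring X E ((d+2)^(Suc s - 2)) c"
proof -
  define Kc where "Kc = (d+2)^(s-2)"
  have Kc0: "0 < Kc" unfolding Kc_def by simp
  define inner where "inner S = (SOME c. proper_coloring S E Kc c)" for S
  have inn: "proper_coloring (M x) E Kc (inner (M x))" if x: "x \<in> X" for x
  proof -
    have "M x \<subseteq> V" using M_sub[OF x] XV by blast
    then have "\<exists>c. proper_coloring (M x) E Kc c" using IH M_noclique[OF x s2 nocl] unfolding Kc_def by blast
    then show ?thesis unfolding inner_def by (rule someI_ex)
  qed
  have fV: "finite V" using sg unfolding simple_graph_def by blast
  have fN: "finite (M ` X)" using finite_subset[OF XV fV] by simp
  obtain g where g: "\<forall>A\<in>M ` X. g A \<le> d + 1" "\<forall>A\<in>M ` X. \<forall>B\<in>M ` X. adjN A B \<longrightarrow> g A \<noteq> g B"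
  proof -
    have sym: "adjN B A" if h: "adjN A B" for A B
    proof -
      obtain a b where "A \<noteq> B" "a \<in> A" "b \<in> B" "{a, b} \<in> E" using h unfolding adjN_def by blast
      then show ?thesis unfolding adjN_def by (metis insert_commute)
    qed
    have irr: "\<not> adjN A A" for A unfolding adjN_def by simp
    show ?thesis using greedy[OF fN, where adj=adjN and k="d+1" and r=rk, OF sym irr key] that by blast
  qed
  define c where "c x = g (M x) * Kc + inner (M x) x" for x
  have divc: "c x div Kc = g (M x)" if "x \<in> X" for x
  proof -
    have "inner (M x) x < Kc" using inn[OF that] M_in[OF that] unfolding proper_coloring_def by blast
    then show ?thesis unfolding c_def using Kc0 by simp
  qed
  have "proper_coloring X E ((d+2)^(Suc s - 2)) c"
    unfolding proper_coloring_def
  proof (intro conjI ballI impI)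
    fix x assume x: "x \<in> X"
    have i: "inner (M x) x < Kc" using inn[OF x] M_in[OF x] unfolding proper_coloring_def by blast
    have "g (M x) \<le> d + 1" using g(1) x by blast
    then have "g (M x) * Kc + inner (M x) x < (d + 2) * Kc"
    proof -
      assume a: "g (M x) \<le> d + 1"
      have "g (M x) * Kc + inner (M x) x < g (M x) * Kc + Kc" using i by simp
      also have "\<dots> = (g (M x) + 1) * Kc" by simp
      also have "\<dots> \<le> (d + 2) * Kc" using a by (intro mult_right_mono) auto
      finally show ?thesis .
    qed
    moreover have "(d+2)^(Suc s - 2) = (d + 2) * Kc" unfolding Kc_def using s2
      by (metis Suc_diff_le diff_Suc_Suc power_Suc)
    ultimately show "c x < (d+2)^(Suc s - 2)" unfolding c_def by simp
  next
    fix x y assume xy: "x \<in> X" "y \<in> X" "x \<noteq> y" "{x, y} \<in> E"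
    show "c x \<noteq> c y"
    proof (cases "M x = M y")
      case True
      have "y \<in> M x" using True M_in[OF xy(2)] by simp
      then have "inner (M x) x \<noteq> inner (M x) y" using inn[OF xy(1)] M_in[OF xy(1)] xy(3,4)
        unfolding proper_coloring_def by blast
      then show ?thesis unfolding c_def using True by simp
    next
      case False
      then have "adjN (M x) (M y)" unfolding adjN_def using M_in xy by blast
      then have "g (M x) \<noteq> g (M y)" using g(2) xy by blast
      then show ?thesis using divc[OF xy(1)] divc[OF xy(2)] by metis
    qed
  qed
  then show ?thesis by blast
qed

end

lemma exists_seq:
  "finite (tverts H) \<Longrightarrow> card (tverts H) = Suc m \<Longrightarrow>
   \<exists>Hs. Hs \<noteq> [] \<and> length Hs = Suc m \<and> hd Hs = H \<and> card (tverts (last Hs)) = 1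
      \<and> (\<forall>H'\<in>set Hs. tverts H' \<subseteq> tverts H)
      \<and> (\<forall>i. Suc i < length Hs \<longrightarrow> contraction_step (Hs ! i) (Hs ! Suc i))"
proof (induction m arbitrary: H)
  case 0
  then show ?case by (intro exI[of _ "[H]"]) auto
next
  case (Suc m)
  have "2 \<le> card (tverts H)" using Suc.prems by simp
  then have "tverts H \<noteq> {}" by auto
  then obtain u where u: "u \<in> tverts H" by blast
  have "card (tverts H - {u}) = Suc m" using Suc.prems u by simp
  then have "tverts H - {u} \<noteq> {}" by (metis card.empty nat.distinct(1))
  then obtain v where "v \<in> tverts H - {u}" by blast
  then have uv: "u \<in> tverts H" "v \<in> tverts H" "u \<noteq> v" using u by auto
  define H' where "H' = contract H u v u"
  have tv: "tverts H' = tverts H - {v}" unfolding H'_def using uv by (auto simp: contract_def)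
  have "finite (tverts H')" "card (tverts H') = Suc m" using tv Suc.prems uv by auto
  then obtain Hs where Hs: "Hs \<noteq> []" "length Hs = Suc m" "hd Hs = H'" "card (tverts (last Hs)) = 1"
      "\<forall>H''\<in>set Hs. tverts H'' \<subseteq> tverts H'"
      "\<forall>i. Suc i < length Hs \<longrightarrow> contraction_step (Hs ! i) (Hs ! Suc i)"
    using Suc.IH by blast
  have cs: "contraction_step H H'" unfolding contraction_step_def H'_def using uv by blast
  show ?case
  proof (intro exI[of _ "H # Hs"] conjI allI impI)
    fix i assume i: "Suc i < length (H # Hs)"
    show "contraction_step ((H # Hs) ! i) ((H # Hs) ! Suc i)"
    proof (cases i)
      case 0 then show ?thesis using cs Hs(1,3) by (simp add: hd_conv_nth)
    next
      case (Suc k) then show ?thesis using Hs(6) i by simp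
    qed
  qed (use Hs tv in auto)
qed

lemma d_seq_exists:
  assumes "simple_graph V E" "V \<noteq> {}"
  shows "\<exists>Hs. d_sequence V E (card V) Hs"
proof -
  have fV: "finite V" using assms unfolding simple_graph_def by blast
  then obtain m where m: "card V = Suc m" using assms(2) by (metis card_gt_0_iff gr0_conv_Suc)
  obtain Hs where Hs: "Hs \<noteq> []" "length Hs = Suc m" "hd Hs = graph_trigraph V E" "card (tverts (last Hs)) = 1"
      "\<forall>H'\<in>set Hs. tverts H' \<subseteq> V"
      "\<forall>i. Suc i < length Hs \<longrightarrow> contraction_step (Hs ! i) (Hs ! Suc i)"
    using exists_seq[of "graph_trigraph V E" m] fV m by (auto simp: graph_trigraph_def)
  have "\<forall>H\<in>set Hs. d_trigraph (card V) H"
  proof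
    fix H assume H: "H \<in> set Hs"
    show "d_trigraph (card V) H" unfolding d_trigraph_def
    proof
      fix x assume "x \<in> tverts H"
      have "{y \<in> tverts H. y \<noteq> x \<and> {x, y} \<in> red H} \<subseteq> V" using Hs(5) H by auto
      then show "card {y \<in> tverts H. y \<noteq> x \<and> {x, y} \<in> red H} \<le> card V" using fV by (rule card_mono[rotated])
    qed
  qed
  then show ?thesis unfolding d_sequence_def using Hs m by auto
qed

lemma d_seq_mono: "d_sequence V E d1 Hs \<Longrightarrow> d1 \<le> d2 \<Longrightarrow> d_sequence V E d2 Hs"
  unfolding d_sequence_def d_trigraph_def by (meson order_trans)

lemma main_claim:
  assumes tw: "tws V E d Hs"
  shows "2 \<le> s \<Longrightarrow> X \<subseteq> V \<Longrightarrow> \<not> (\<exists>K\<subseteq>X. card K = s \<and> is_clique E K) \<Longrightarrow> \<exists>c. proper_coloring X E ((d+2)^(s-2)) c"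
proof (induction s arbitrary: X rule: nat_induct_at_least)
  case base
  have "\<forall>x\<in>X. \<forall>y\<in>X. x \<noteq> y \<longrightarrow> {x, y} \<notin> E"
  proof (intro ballI impI)
    fix x y assume xy: "x \<in> X" "y \<in> X" "x \<noteq> y"
    show "{x, y} \<notin> E"
    proof
      assume e: "{x, y} \<in> E"
      have "{x, y} \<subseteq> X" "card {x, y} = 2" "is_clique E {x, y}"
        using xy e unfolding is_clique_def by (auto simp: insert_commute)
      then show False using base.prems(2) by blast
    qed
  qed
  then have "proper_coloring X E ((d+2)^(2-2)) (\<lambda>_. 0)" unfolding proper_coloring_def by auto
  then show ?case by blast
next
  case (Suc s)
  interpret twsX V E d Hs X using tw Suc.prems(1) unfolding twsX_def twsX_axioms_def by blast
  show ?case using step[OF Suc.hyps(1) Suc.prems(2)] Suc.IH by blast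
qed

theorem mainTheorem10:
  fixes V :: "'a set" and E :: "'a set set" and t d :: nat
  assumes "simple_graph V E"
    and "t \<ge> 3"
    and "twin_width V E \<le> d"
    and "\<not> (\<exists>K \<subseteq> V. card K = t \<and> is_clique E K)"
  shows "\<exists>c. proper_coloring V E ((d + 2) ^ (t - 2)) c"
proof (cases "V = {}")
  case True
  then show ?thesis unfolding proper_coloring_def by auto
next
  case False
  have "\<exists>Hs. d_sequence V E (card V) Hs" using d_seq_exists[OF assms(1) False] .
  then have "\<exists>dd Hs. d_sequence V E dd Hs" by blast
  then have "\<exists>Hs. d_sequence V E (twin_width V E) Hs"
    unfolding twin_width_def by (rule LeastI_ex)
  then obtain Hs where "d_sequence V E d Hs" using d_seq_mono assms(3) by blast
  then have "tws V E d Hs" using assms(1) by unfold_locales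
  then show ?thesis using main_claim[of V E d Hs t V] assms by auto
qed


end
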